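(* Let $k=2r+1$ with $r\geq 1$ and $G=BS(1,k)$. Let \[\mathcal{C}_o=\{\epsilon,a^{\pm1},\ldots,a^{\pm(r+1)}\}\cup\{a^{x_0}ta^{x_1}t\cdots ta^{x_d}t^{-d}\mid d\geq1,\ x_0\neq0,\ x_d\neq0,\ A\},\] where $A$ denotes: $|x_d|\leq r+1$; $|x_i|\leq r$ for $0\le i<d$; and if $x_{d-1}=\pm r$ then $x_d\neq\mp1$. Then (1) $\mathcal{C}_o$ is an unambiguous context-free language over the alphabet $\{a^{\pm1},t^{\pm1}\}$; and (2) the subgroup $\mathbb{Z}[1/k]$ has rational relative conjugacy growth, i.e. the series $\sum_{n\ge0}c_0(n)z^n$ is rational, where $c_0(n)$ is the number of conjugacy classes of $G$ contained in $\mathbb{Z}[1/k]$ whose length (with respect to $\{a,t\}$) is $n$.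
   Context: $BS(1,k)=\langle a,t\mid tat^{-1}=a^k\rangle\cong \mathbb{Z}[1/k]\rtimes\mathbb{Z}$ via $a\mapsto(1,0)$, $t\mapsto(0,1)$, the generator of $\mathbb{Z}$ acting by multiplication by $k$; $\mathbb{Z}[1/k]$ is the normal subgroup of elements $(x,0)$. $a^x$ denotes $|x|$ copies of $a$ or $a^{-1}$ according to the sign of $x$. The length of a conjugacy class is the minimal word length of its elements. A language is unambiguous context-free if it is generated by a context-free grammar in which each word has a unique derivation. A series is rational if it is a quotient of two polynomials with integer coefficients. *)

theory Defs
  imports Main "HOL-Computational_Algebra.Polynomial_FPS"
begin

datatype gen = A | Ai | T | Ti

definition apow :: "int \<Rightarrow> gen list" where
  "apow x = replicate (nat \<bar>x\<bar>) (if x \<ge> 0 then A else Ai)"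

fun twd :: "int list \<Rightarrow> gen list" where
  "twd [] = []"
| "twd [x] = apow x"
| "twd (x # xs) = apow x @ [T] @ twd xs"

definition cword :: "int list \<Rightarrow> gen list" where
  "cword xs = twd xs @ replicate (length xs - 1) Ti"

definition Co :: "nat \<Rightarrow> gen list set" where
  "Co r = {[]} \<union> {apow x | x. x \<noteq> 0 \<and> \<bar>x\<bar> \<le> int r + 1} \<union>
     {cword xs | xs d. length xs = d + 1 \<and> d \<ge> 1 \<and> xs ! 0 \<noteq> 0 \<and> xs ! d \<noteq> 0 \<and>
        \<bar>xs ! d\<bar> \<le> int r + 1 \<and> (\<forall>i<d. \<bar>xs ! i\<bar> \<le> int r) \<and>
        (xs ! (d - 1) = int r \<longrightarrow> xs ! d \<noteq> -1) \<and>
        (xs ! (d - 1) = - int r \<longrightarrow> xs ! d \<noteq> 1)}"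

record 't cfg =
  prods :: "(nat \<times> (nat + 't) list) set"
  start :: nat

datatype 't ptree = Leaf 't | Node nat "'t ptree list"

fun root :: "'t ptree \<Rightarrow> nat + 't" where
  "root (Leaf a) = Inr a"
| "root (Node n ts) = Inl n"

fun yield :: "'t ptree \<Rightarrow> 't list" where
  "yield (Leaf a) = [a]"
| "yield (Node n ts) = concat (map yield ts)"

fun valid_tree :: "'t cfg \<Rightarrow> 't ptree \<Rightarrow> bool" where
  "valid_tree G (Leaf a) = True"
| "valid_tree G (Node n ts) =
     ((n, map root ts) \<in> prods G \<and> (\<forall>t \<in> set ts. valid_tree G t))"

definition derivation_tree :: "'t cfg \<Rightarrow> 't list \<Rightarrow> 't ptree \<Rightarrow> bool" where
  "derivation_tree G w t \<longleftrightarrow> valid_tree G t \<and> root t = Inl (start G) \<and> yield t = w"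

definition lang :: "'t cfg \<Rightarrow> 't list set" where
  "lang G = {w. \<exists>t. derivation_tree G w t}"

definition unambiguous :: "'t cfg \<Rightarrow> bool" where
  "unambiguous G \<longleftrightarrow> (\<forall>w t1 t2. derivation_tree G w t1 \<and> derivation_tree G w t2 \<longrightarrow> t1 = t2)"

definition unambiguous_cfl :: "'t list set \<Rightarrow> bool" where
  "unambiguous_cfl L \<longleftrightarrow> (\<exists>G. finite (prods G) \<and> lang G = L \<and> unambiguous G)"

section \<open>BS(1,k) = Z[1/k] \<rtimes> Z, elements as pairs (x, m) with x rational\<close>

type_synonym bs = "rat \<times> int"

definition bmul :: "nat \<Rightarrow> bs \<Rightarrow> bs \<Rightarrow> bs" where
  "bmul k g h = (fst g + (of_nat k) powi (snd g) * fst h, snd g + snd h)"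

definition binv :: "nat \<Rightarrow> bs \<Rightarrow> bs" where
  "binv k g = (- ((of_nat k) powi (- snd g)) * fst g, - snd g)"

fun gval :: "gen \<Rightarrow> bs" where
  "gval A = (1, 0)" | "gval Ai = (-1, 0)" | "gval T = (0, 1)" | "gval Ti = (0, -1)"

fun beval :: "nat \<Rightarrow> gen list \<Rightarrow> bs" where
  "beval k [] = (0, 0)"
| "beval k (g # w) = bmul k (gval g) (beval k w)"

definition BSgrp :: "nat \<Rightarrow> bs set" where
  "BSgrp k = range (beval k)"

definition conjcl :: "nat \<Rightarrow> bs \<Rightarrow> bs set" where
  "conjcl k g = {bmul k (bmul k h g) (binv k h) | h. h \<in> BSgrp k}"

definition classlen :: "nat \<Rightarrow> bs set \<Rightarrow> nat" where
  "classlen k C = (LEAST n. \<exists>w. length w = n \<and> beval k w \<in> C)"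

text \<open>Number of conjugacy classes contained in Z[1/k] (elements (x,0)) of length n.\<close>
definition c0 :: "nat \<Rightarrow> nat \<Rightarrow> nat" where
  "c0 k n = card {C. (\<exists>g \<in> BSgrp k. C = conjcl k g) \<and> C \<subseteq> {p. snd p = 0} \<and> classlen k C = n}"

definition rational_series :: "(nat \<Rightarrow> nat) \<Rightarrow> bool" where
  "rational_series c \<longleftrightarrow> (\<exists>p q :: int poly. q \<noteq> 0 \<and>
     Abs_fps (\<lambda>n. int (c n)) * fps_of_poly q = fps_of_poly p)"

end

theory Submission
  imports Defs "HOL-Library.Countable"
begin


type_synonym st = "bool \<times> int \<times> int"

fun inb :: "nat \<Rightarrow> st \<Rightarrow> bool" where
  "inb r (f,p,c) = (\<bar>p\<bar> \<le> int r \<and> \<bar>c\<bar> \<le> int r + 1)"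

fun dl :: "nat \<Rightarrow> st \<Rightarrow> gen \<Rightarrow> st option" where
  "dl r (f,p,c) A = (if inb r (f,p,c) \<and> 0 \<le> c \<and> c < int r + 1 then Some (f,p,c+1) else None)"
| "dl r (f,p,c) Ai = (if inb r (f,p,c) \<and> c \<le> 0 \<and> - (int r + 1) < c then Some (f,p,c-1) else None)"
| "dl r (f,p,c) T = (if inb r (f,p,c) \<and> \<bar>c\<bar> \<le> int r \<and> (f \<longrightarrow> c \<noteq> 0) then Some (False,c,0) else None)"
| "dl r q Ti = None"

fun acc :: "nat \<Rightarrow> st \<Rightarrow> bool" where
  "acc r (f,p,c) = (inb r (f,p,c) \<and> (\<not> f \<longrightarrow> c \<noteq> 0 \<and> (p = int r \<longrightarrow> c \<noteq> -1) \<and> (p = - int r \<longrightarrow> c \<noteq> 1)))"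

fun steps :: "nat \<Rightarrow> st \<Rightarrow> gen list \<Rightarrow> st option" where
  "steps r q [] = Some q"
| "steps r q (g # w) = (case dl r q g of None \<Rightarrow> None | Some q' \<Rightarrow> steps r q' w)"

definition accepts :: "nat \<Rightarrow> st \<Rightarrow> gen list \<Rightarrow> bool" where
  "accepts r q w = (case steps r q w of None \<Rightarrow> False | Some q' \<Rightarrow> acc r q')"

definition cntT :: "gen list \<Rightarrow> nat" where
  "cntT w = length (filter (\<lambda>g. g = T) w)"

definition P :: "nat \<Rightarrow> (nat \<times> (nat + gen) list) set" where
  "P r = {(to_nat q, [Inr g, Inl (to_nat q')]) | q g q'. g \<noteq> T \<and> dl r q g = Some q'}
     \<union> {(to_nat q, [Inr T, Inl (to_nat q'), Inr Ti]) | q q'. dl r q T = Some q'}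
     \<union> {(to_nat q, []) | q. acc r q}"

definition GG :: "nat \<Rightarrow> gen cfg" where
  "GG r = \<lparr>prods = P r, start = to_nat (True, 0::int, 0::int)\<rparr>"

lemma root_Inr: "Defs.root t = Inr c \<Longrightarrow> t = Leaf c"
  by (cases t) auto

lemma root_Inl: "Defs.root t = Inl n \<Longrightarrow> \<exists>ts. t = Node n ts"
  by (cases t) auto

lemma map_root2: "map Defs.root ts = [Inr c, Inl m] \<Longrightarrow> \<exists>u. ts = [Leaf c, u] \<and> Defs.root u = Inl m"
  by (cases ts; cases "tl ts"; auto dest: root_Inr)

lemma map_root3: "map Defs.root ts = [Inr c, Inl m, Inr e] \<Longrightarrow> \<exists>u. ts = [Leaf c, u, Leaf e] \<and> Defs.root u = Inl m"
  by (cases ts; cases "tl ts"; cases "tl (tl ts)"; auto dest: root_Inr)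

lemma generic_unamb:
  assumes H: "\<And>n rhs. (n,rhs) \<in> prods G \<Longrightarrow> rhs = [] \<or> (\<exists>c m. rhs = [Inr c, Inl m]) \<or> (\<exists>c m e. rhs = [Inr c, Inl m, Inr e])"
  and D: "\<And>n c r1 r2. (n, Inr c # r1) \<in> prods G \<Longrightarrow> (n, Inr c # r2) \<in> prods G \<Longrightarrow> r1 = r2"
  shows "valid_tree G t1 \<Longrightarrow> valid_tree G t2 \<Longrightarrow> Defs.root t1 = Defs.root t2 \<Longrightarrow> yield t1 = yield t2 \<Longrightarrow> t1 = t2"
proof (induction t1 arbitrary: t2)
  case (Leaf a)
  then show ?case by (metis Defs.root.simps(1) root_Inr)
next
  case (Node n ts)
  from Node.prems(3) obtain ts2 where t2: "t2 = Node n ts2" by (metis Defs.root.simps(2) root_Inl)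
  have p1: "(n, map Defs.root ts) \<in> prods G" using Node.prems(1) by simp
  have p2: "(n, map Defs.root ts2) \<in> prods G" using Node.prems(2) t2 by simp
  have v1: "\<forall>t\<in>set ts. valid_tree G t" using Node.prems(1) by simp
  have v2: "\<forall>t\<in>set ts2. valid_tree G t" using Node.prems(2) t2 by simp
  have y: "concat (map yield ts) = concat (map yield ts2)" using Node.prems(4) t2 by simp
  have shape: "xs = [] \<or> (\<exists>c m u. xs = [Leaf c, u] \<and> Defs.root u = Inl m)
      \<or> (\<exists>c m e u. xs = [Leaf c, u, Leaf e] \<and> Defs.root u = Inl m)" if "(n, map Defs.root xs) \<in> prods G" for xs
  proof -
    from H[OF that] show ?thesis
    proof (elim disjE exE)
      assume "map Defs.root xs = []" then show ?thesis by simp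
    next
      fix c m assume "map Defs.root xs = [Inr c, Inl m]"
      from map_root2[OF this] obtain u where "xs = [Leaf c, u]" "Defs.root u = Inl m" by blast
      then show ?thesis by blast
    next
      fix c m e assume "map Defs.root xs = [Inr c, Inl m, Inr e]"
      from map_root3[OF this] obtain u where "xs = [Leaf c, u, Leaf e]" "Defs.root u = Inl m" by blast
      then show ?thesis by blast
    qed
  qed
  have IH: "\<And>u u2. u \<in> set ts \<Longrightarrow> u2 \<in> set ts2 \<Longrightarrow> Defs.root u = Defs.root u2 \<Longrightarrow> yield u = yield u2 \<Longrightarrow> u = u2"
    using Node.IH v1 v2 by blast
  from shape[OF p1] show ?case
  proof (elim disjE exE conjE)
    assume e1: "ts = []"
    from shape[OF p2] show ?case
    proof (elim disjE exE conjE)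
      assume "ts2 = []" then show ?case using e1 t2 by simp
    next
      fix c m u assume "ts2 = [Leaf c, u]" then show ?case using e1 y by simp
    next
      fix c m e u assume "ts2 = [Leaf c, u, Leaf e]" then show ?case using e1 y by simp
    qed
  next
    fix c m u assume a1: "ts = [Leaf c, u]" and r1: "Defs.root u = Inl m"
    from shape[OF p2] show ?case
    proof (elim disjE exE conjE)
      assume "ts2 = []" then show ?case using a1 y by simp
    next
      fix c2 m2 u2 assume a2: "ts2 = [Leaf c2, u2]" and r2: "Defs.root u2 = Inl m2"
      have cc: "c = c2" and yy: "yield u = yield u2" using y a1 a2 by auto
      have "(n, Inr c # [Inl m]) \<in> prods G" using p1 a1 r1 by simp
      moreover have "(n, Inr c # [Inl m2]) \<in> prods G" using p2 a2 r2 cc by simp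
      ultimately have "m = m2" using D by blast
      then have "u = u2" using IH[of u u2] a1 a2 r1 r2 yy by simp
      then show ?case using t2 a1 a2 cc by simp
    next
      fix c2 m2 e2 u2 assume a2: "ts2 = [Leaf c2, u2, Leaf e2]" and r2: "Defs.root u2 = Inl m2"
      have cc: "c = c2" using y a1 a2 by auto
      have "(n, Inr c # [Inl m]) \<in> prods G" using p1 a1 r1 by simp
      moreover have "(n, Inr c # [Inl m2, Inr e2]) \<in> prods G" using p2 a2 r2 cc by simp
      ultimately show ?case using D by blast
    qed
  next
    fix c m e u assume a1: "ts = [Leaf c, u, Leaf e]" and r1: "Defs.root u = Inl m"
    from shape[OF p2] show ?case
    proof (elim disjE exE conjE)
      assume "ts2 = []" then show ?case using a1 y by simp
    next
      fix c2 m2 u2 assume a2: "ts2 = [Leaf c2, u2]" and r2: "Defs.root u2 = Inl m2"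
      have cc: "c = c2" using y a1 a2 by auto
      have "(n, Inr c # [Inl m, Inr e]) \<in> prods G" using p1 a1 r1 by simp
      moreover have "(n, Inr c # [Inl m2]) \<in> prods G" using p2 a2 r2 cc by simp
      ultimately show ?case using D by blast
    next
      fix c2 m2 e2 u2 assume a2: "ts2 = [Leaf c2, u2, Leaf e2]" and r2: "Defs.root u2 = Inl m2"
      have cc: "c = c2" and yy: "yield u @ [e] = yield u2 @ [e2]" using y a1 a2 by auto
      have yy2: "yield u = yield u2" and ee: "e = e2" using yy by auto
      have "(n, Inr c # [Inl m, Inr e]) \<in> prods G" using p1 a1 r1 by simp
      moreover have "(n, Inr c # [Inl m2, Inr e2]) \<in> prods G" using p2 a2 r2 cc by simp
      ultimately have "m = m2" using D by blast
      then have "u = u2" using IH[of u u2] a1 a2 r1 r2 yy2 by simp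
      then show ?case using t2 a1 a2 cc ee by simp
    qed
  qed
qed


lemma P_H: "(n,rhs) \<in> P r \<Longrightarrow> rhs = [] \<or> (\<exists>c m. rhs = [Inr c, Inl m]) \<or> (\<exists>c m e. rhs = [Inr c, Inl m, Inr e])"
  unfolding P_def by blast

lemma P_D: "(n, Inr c # r1) \<in> P r \<Longrightarrow> (n, Inr c # r2) \<in> P r \<Longrightarrow> r1 = r2"
  unfolding P_def by (auto dest: injD[OF inj_to_nat])

lemma gen_UNIV: "(UNIV :: gen set) = {A, Ai, T, Ti}"
  using gen.exhaust by auto

lemma inb_finite: "finite {q. inb r q}"
proof -
  have "{q. inb r q} \<subseteq> UNIV \<times> {- int r .. int r} \<times> {- int r - 1 .. int r + 1}" by auto
  moreover have "finite (UNIV \<times> {- int r .. int r} \<times> {- int r - 1 .. int r + 1} :: st set)" by simp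
  ultimately show ?thesis using finite_subset by blast
qed

lemma dl_inb: "dl r q g = Some q' \<Longrightarrow> inb r q"
  by (cases q; cases g) (auto split: if_splits)

lemma acc_inb: "acc r q \<Longrightarrow> inb r q"
  by (cases q) auto

lemma P_finite: "finite (P r)"
proof -
  have fg: "finite (UNIV :: gen set)" by (simp add: gen_UNIV)
  have F: "finite ({q. inb r q} \<times> (UNIV :: gen set))" using inb_finite fg by simp
  have s1: "{(to_nat q, [Inr g, Inl (to_nat q')]) | q g q'. g \<noteq> T \<and> dl r q g = Some q'}
     \<subseteq> (\<lambda>(q,g). (to_nat q, [Inr g, Inl (to_nat (the (dl r q g)))])) ` ({q. inb r q} \<times> UNIV)"
  proof (rule subsetI, elim CollectE exE conjE)
    fix x q g q' assume x: "x = (to_nat q, [Inr g, Inl (to_nat q')])" and d: "dl r q g = Some q'"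
    show "x \<in> (\<lambda>(q,g). (to_nat q, [Inr g, Inl (to_nat (the (dl r q g)))])) ` ({q. inb r q} \<times> UNIV)"
      by (rule image_eqI[where x="(q,g)"]) (use x d dl_inb in auto)
  qed
  have s2: "{(to_nat q, [Inr T, Inl (to_nat q'), Inr Ti]) | q q'. dl r q T = Some q'}
     \<subseteq> (\<lambda>q. (to_nat q, [Inr T, Inl (to_nat (the (dl r q T))), Inr Ti])) ` {q. inb r q}"
  proof (rule subsetI, elim CollectE exE conjE)
    fix x q q' assume x: "x = (to_nat q, [Inr T, Inl (to_nat q'), Inr Ti])" and d: "dl r q T = Some q'"
    show "x \<in> (\<lambda>q. (to_nat q, [Inr T, Inl (to_nat (the (dl r q T))), Inr Ti])) ` {q. inb r q}"
      by (rule image_eqI[where x="q"]) (use x d dl_inb in auto)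
  qed
  have s3: "{(to_nat q, ([] :: (nat + gen) list)) | q. acc r q} \<subseteq> (\<lambda>q. (to_nat q, [])) ` {q. inb r q}"
  proof (rule subsetI, elim CollectE exE conjE)
    fix x q assume x: "x = (to_nat q, ([] :: (nat + gen) list))" and d: "acc r q"
    show "x \<in> (\<lambda>q. (to_nat q, [])) ` {q. inb r q}"
      by (rule image_eqI[where x="q"]) (use x d acc_inb in auto)
  qed
  show ?thesis unfolding P_def
    using finite_subset[OF s1 finite_imageI[OF F]] finite_subset[OF s2 finite_imageI[OF inb_finite]]
      finite_subset[OF s3 finite_imageI[OF inb_finite]] by blast
qed

lemma cntT_simps[simp]: "cntT [] = 0" "cntT (T # w) = Suc (cntT w)" "g \<noteq> T \<Longrightarrow> cntT (g # w) = cntT w"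
  "cntT (u @ v) = cntT u + cntT v"
  by (auto simp: cntT_def)

lemma sound: "valid_tree (GG r) t \<Longrightarrow> Defs.root t = Inl (to_nat q) \<Longrightarrow>
   \<exists>w. yield t = w @ replicate (cntT w) Ti \<and> accepts r q w"
proof (induction t arbitrary: q)
  case (Leaf a)
  then show ?case by simp
next
  case (Node n ts)
  have n: "n = to_nat q" using Node.prems(2) by simp
  have p: "(to_nat q, map Defs.root ts) \<in> P r" using Node.prems(1) n by (simp add: GG_def)
  have v: "\<forall>t\<in>set ts. valid_tree (GG r) t" using Node.prems(1) by simp
  from p[unfolded P_def] show ?case
  proof (elim UnE CollectE exE conjE)
    fix q0 g q' assume e: "(to_nat q, map Defs.root ts) = (to_nat q0, [Inr g, Inl (to_nat q')])"
      and g: "g \<noteq> T" and d: "dl r q0 g = Some q'"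
    have qq: "q0 = q" using e by (auto dest: injD[OF inj_to_nat])
    from e obtain u where ts: "ts = [Leaf g, u]" and ru: "Defs.root u = Inl (to_nat q')"
      using map_root2 by (metis prod.inject)
    from Node.IH[of u q'] ts v ru obtain w where w: "yield u = w @ replicate (cntT w) Ti" "accepts r q' w"
      by auto
    show ?thesis
      by (rule exI[of _ "g # w"]) (use w ts d qq g in \<open>auto simp: accepts_def\<close>)
  next
    fix q0 q' assume e: "(to_nat q, map Defs.root ts) = (to_nat q0, [Inr T, Inl (to_nat q'), Inr Ti])"
      and d: "dl r q0 T = Some q'"
    have qq: "q0 = q" using e by (auto dest: injD[OF inj_to_nat])
    from e obtain u where ts: "ts = [Leaf T, u, Leaf Ti]" and ru: "Defs.root u = Inl (to_nat q')"
      using map_root3 by (metis prod.inject)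
    from Node.IH[of u q'] ts v ru obtain w where w: "yield u = w @ replicate (cntT w) Ti" "accepts r q' w"
      by auto
    show ?thesis
      by (rule exI[of _ "T # w"]) (use w ts d qq in \<open>auto simp: accepts_def replicate_append_same\<close>)
  next
    fix q0 assume e: "(to_nat q, map Defs.root ts) = (to_nat q0, [])" and a: "acc r q0"
    have qq: "q0 = q" using e by (auto dest: injD[OF inj_to_nat])
    have "ts = []" using e by simp
    then show ?thesis using a qq by (auto simp: accepts_def)
  qed
qed

lemma complete: "accepts r q w \<Longrightarrow>
   \<exists>t. valid_tree (GG r) t \<and> Defs.root t = Inl (to_nat q) \<and> yield t = w @ replicate (cntT w) Ti"
proof (induction w arbitrary: q)
  case Nil
  then have "acc r q" by (simp add: accepts_def)
  then have "(to_nat q, []) \<in> P r" unfolding P_def by blast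
  then have "valid_tree (GG r) (Node (to_nat q) [])" by (simp add: GG_def)
  then show ?case by (intro exI[of _ "Node (to_nat q) []"]) simp
next
  case (Cons g w)
  then obtain q' where d: "dl r q g = Some q'" and a: "accepts r q' w"
    by (auto simp: accepts_def split: option.splits)
  from Cons.IH[OF a] obtain u where u: "valid_tree (GG r) u" "Defs.root u = Inl (to_nat q')"
     "yield u = w @ replicate (cntT w) Ti" by blast
  show ?case
  proof (cases "g = T")
    case True
    have "(to_nat q, [Inr T, Inl (to_nat q'), Inr Ti]) \<in> P r" unfolding P_def using d True by blast
    then have "valid_tree (GG r) (Node (to_nat q) [Leaf T, u, Leaf Ti])"
      using u by (simp add: GG_def)
    then show ?thesis using u True
      by (intro exI[of _ "Node (to_nat q) [Leaf T, u, Leaf Ti]"]) (simp add: replicate_append_same)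
  next
    case False
    have "(to_nat q, [Inr g, Inl (to_nat q')]) \<in> P r" unfolding P_def using d False by blast
    then have "valid_tree (GG r) (Node (to_nat q) [Leaf g, u])"
      using u by (simp add: GG_def)
    then show ?thesis using u False
      by (intro exI[of _ "Node (to_nat q) [Leaf g, u]"]) simp
  qed
qed

lemma lang_GG: "lang (GG r) = {w @ replicate (cntT w) Ti | w. accepts r (True, 0, 0) w}"
  unfolding lang_def derivation_tree_def
  using sound complete by (fastforce simp: GG_def)

lemma unamb_GG: "unambiguous (GG r)"
  unfolding unambiguous_def derivation_tree_def
  using generic_unamb[of "GG r"] P_H P_D by (auto simp: GG_def)


fun ReachB :: "nat \<Rightarrow> st \<Rightarrow> int list \<Rightarrow> bool" where
  "ReachB r (f,p,c) ys = (\<bar>c\<bar> \<le> int r + 1 \<and> \<bar>p\<bar> \<le> int r \<and> (f \<longleftrightarrow> ys = []) \<and> (f \<longrightarrow> p = 0) \<and>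
      (ys \<noteq> [] \<longrightarrow> p = last ys \<and> hd ys \<noteq> 0) \<and> (\<forall>y\<in>set ys. \<bar>y\<bar> \<le> int r))"

lemma twd_snoc: "xs \<noteq> [] \<Longrightarrow> twd (xs @ [y]) = twd xs @ T # apow y"
  by (induction xs rule: twd.induct) auto

lemma apow_0[simp]: "apow 0 = []" by (simp add: apow_def)

lemma apow_succ: "0 \<le> c \<Longrightarrow> apow (c+1) = apow c @ [A]"
proof -
  assume c: "0 \<le> c"
  have "nat \<bar>c+1\<bar> = Suc (nat \<bar>c\<bar>)" using c by simp
  then show ?thesis using c by (simp add: apow_def replicate_append_same)
qed

lemma apow_pred: "c \<le> 0 \<Longrightarrow> apow (c-1) = apow c @ [Ai]"
proof -
  assume c: "c \<le> 0"
  have "nat \<bar>c-1\<bar> = Suc (nat \<bar>c\<bar>)" using c by simp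
  then show ?thesis using c by (simp add: apow_def replicate_append_same)
qed

lemma twd_succ: "0 \<le> c \<Longrightarrow> twd (ys @ [c+1]) = twd (ys @ [c]) @ [A]"
  by (cases "ys = []") (auto simp: twd_snoc apow_succ)

lemma twd_pred: "c \<le> 0 \<Longrightarrow> twd (ys @ [c-1]) = twd (ys @ [c]) @ [Ai]"
  by (cases "ys = []") (auto simp: twd_snoc apow_pred)

lemma steps_append: "steps r q (u @ v) = (case steps r q u of None \<Rightarrow> None | Some q' \<Rightarrow> steps r q' v)"
  by (induction u arbitrary: q) (auto split: option.splits)

lemma steps_rep_A: "0 \<le> c \<Longrightarrow> c + int n \<le> int r + 1 \<Longrightarrow> \<bar>p\<bar> \<le> int r \<Longrightarrow>
   steps r (f,p,c) (replicate n A) = Some (f,p,c + int n)"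
  by (induction n arbitrary: c) auto

lemma steps_rep_Ai: "c \<le> 0 \<Longrightarrow> c - int n \<ge> - int r - 1 \<Longrightarrow> \<bar>p\<bar> \<le> int r \<Longrightarrow>
   steps r (f,p,c) (replicate n Ai) = Some (f,p,c - int n)"
  by (induction n arbitrary: c) auto

lemma steps_apow: "\<bar>p\<bar> \<le> int r \<Longrightarrow> \<bar>x\<bar> \<le> int r + 1 \<Longrightarrow> steps r (f,p,0) (apow x) = Some (f,p,x)"
  using steps_rep_A[where c=0 and n="nat x" and r=r and p=p and f=f] steps_rep_Ai[where c=0 and n="nat (-x)" and r=r and p=p and f=f]
  by (cases "x \<ge> 0") (auto simp: apow_def)

lemma reach_fwd: "steps r (True,0,0) w = Some (f,p,c) \<Longrightarrow> \<exists>ys. w = twd (ys @ [c]) \<and> ReachB r (f,p,c) ys"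
proof (induction w arbitrary: f p c rule: rev_induct)
  case Nil
  then show ?case by (intro exI[of _ "[]"]) auto
next
  case (snoc g w)
  from snoc.prems obtain q0 where s0: "steps r (True,0,0) w = Some q0" and d: "dl r q0 g = Some (f,p,c)"
    by (auto simp: steps_append split: option.splits)
  obtain f0 p0 c0 where q0: "q0 = (f0,p0,c0)" by (cases q0) auto
  from snoc.IH[of f0 p0 c0] s0 q0 obtain ys where w: "w = twd (ys @ [c0])" and R: "ReachB r (f0,p0,c0) ys"
    by auto
  show ?case
  proof (cases g)
    case A
    with d q0 have "f = f0" "p = p0" "c = c0 + 1" "0 \<le> c0" "c0 < int r + 1" by (auto split: if_splits)
    then show ?thesis using R w twd_succ[of c0 ys] A by (intro exI[of _ ys]) auto
  next
    case Ai
    with d q0 have "f = f0" "p = p0" "c = c0 - 1" "c0 \<le> 0" "- (int r + 1) < c0" by (auto split: if_splits)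
    then show ?thesis using R w twd_pred[of c0 ys] Ai by (intro exI[of _ ys]) auto
  next
    case T
    with d q0 have e: "f = False" "p = c0" "c = 0" "\<bar>c0\<bar> \<le> int r" "f0 \<longrightarrow> c0 \<noteq> 0" by (auto split: if_splits)
    have "twd ((ys @ [c0]) @ [0]) = twd (ys @ [c0]) @ [T]" using twd_snoc[of "ys @ [c0]" 0] by simp
    moreover have "ReachB r (f,p,c) (ys @ [c0])" using R e by (cases ys) auto
    ultimately show ?thesis using w T e by (intro exI[of _ "ys @ [c0]"]) auto
  next
    case Ti
    with d show ?thesis by (cases q0) auto
  qed
qed

lemma reach_bwd: "ReachB r (f,p,c) ys \<Longrightarrow> steps r (True,0,0) (twd (ys @ [c])) = Some (f,p,c)"
proof (induction ys arbitrary: f p c rule: rev_induct)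
  case Nil
  then show ?case using steps_apow[of 0 r c True] by simp
next
  case (snoc z zs)
  from snoc.prems have e: "f = False" "p = z" "hd (zs @ [z]) \<noteq> 0" "\<bar>c\<bar> \<le> int r + 1" "\<bar>z\<bar> \<le> int r"
    "\<forall>y\<in>set zs. \<bar>y\<bar> \<le> int r" by auto
  define p0 where "p0 = (if zs = [] then 0 else last zs)"
  have R0: "ReachB r (zs = [], p0, z) zs" using e snoc.prems by (cases zs) (auto simp: p0_def)
  have s0: "steps r (True,0,0) (twd (zs @ [z])) = Some (zs = [], p0, z)" using snoc.IH[OF R0] .
  have p0b: "\<bar>p0\<bar> \<le> int r" using e by (auto simp: p0_def)
  have z0: "zs = [] \<longrightarrow> z \<noteq> 0" using e by auto
  have d: "dl r (zs = [], p0, z) T = Some (False, z, 0)" using e p0b z0 by simp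
  have "twd ((zs @ [z]) @ [c]) = twd (zs @ [z]) @ T # apow c" using twd_snoc[of "zs @ [z]" c] by simp
  then show ?case using s0 d steps_apow[of z r c False] e by (simp add: steps_append)
qed

lemma cntT_apow[simp]: "cntT (apow x) = 0"
  by (auto simp: cntT_def apow_def)

lemma cntT_twd: "cntT (twd xs) = length xs - 1"
  by (induction xs rule: twd.induct) auto

lemma accepts_iff: "accepts r (True,0,0) w \<longleftrightarrow> (\<exists>ys f p c. w = twd (ys @ [c]) \<and> ReachB r (f,p,c) ys \<and> acc r (f,p,c))"
proof
  assume "accepts r (True,0,0) w"
  then obtain q where s: "steps r (True,0,0) w = Some q" and a: "acc r q" by (auto simp: accepts_def split: option.splits)
  obtain f p c where q: "q = (f,p,c)" by (cases q) auto
  from reach_fwd[of r w f p c] s q a show "\<exists>ys f p c. w = twd (ys @ [c]) \<and> ReachB r (f,p,c) ys \<and> acc r (f,p,c)" by blast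
next
  assume "\<exists>ys f p c. w = twd (ys @ [c]) \<and> ReachB r (f,p,c) ys \<and> acc r (f,p,c)"
  then obtain ys f p c where w: "w = twd (ys @ [c])" and R: "ReachB r (f,p,c) ys" and a: "acc r (f,p,c)" by blast
  have "steps r (True,0,0) w = Some (f,p,c)" using reach_bwd[OF R] w by simp
  then show "accepts r (True,0,0) w" using a by (simp add: accepts_def)
qed


lemma Co_sub: "x \<in> Co r \<Longrightarrow> \<exists>w. x = w @ replicate (cntT w) Ti \<and> accepts r (True,0,0) w"
proof (unfold Co_def, elim UnE CollectE exE conjE)
  assume "x \<in> {[]}"
  then have "x = [] @ replicate (cntT []) Ti" by simp
  moreover have "accepts r (True,0,0) []" unfolding accepts_iff
    by (rule exI[of _ "[]"], rule exI[of _ True], rule exI[of _ 0], rule exI[of _ 0]) simp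
  ultimately show ?thesis by blast
next
  fix y assume x: "x = apow y" and y: "y \<noteq> 0" "\<bar>y\<bar> \<le> int r + 1"
  have "accepts r (True,0,0) (apow y)" unfolding accepts_iff
    by (rule exI[of _ "[]"], rule exI[of _ True], rule exI[of _ 0], rule exI[of _ y]) (use y in simp)
  then show ?thesis using x by (intro exI[of _ "apow y"]) simp
next
  fix xs d assume x: "x = cword xs" and l: "length xs = d + 1" and d: "1 \<le> d" and h0: "xs ! 0 \<noteq> 0"
    and hd: "xs ! d \<noteq> 0" "\<bar>xs ! d\<bar> \<le> int r + 1" and hi: "\<forall>i<d. \<bar>xs ! i\<bar> \<le> int r"
    and c1: "xs ! (d - 1) = int r \<longrightarrow> xs ! d \<noteq> -1" and c2: "xs ! (d - 1) = - int r \<longrightarrow> xs ! d \<noteq> 1"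
  define ys where "ys = take d xs"
  have xs: "xs = ys @ [xs ! d]" unfolding ys_def using l by (simp add: take_Suc_conv_app_nth[symmetric])
  have ysne: "ys \<noteq> []" using d l by (auto simp: ys_def)
  have lys: "length ys = d" using l by (simp add: ys_def)
  have last: "last ys = xs ! (d - 1)" using ysne lys d by (simp add: last_conv_nth ys_def)
  have hdy: "hd ys = xs ! 0" using ysne d by (simp add: hd_conv_nth ys_def)
  have sety: "\<forall>y\<in>set ys. \<bar>y\<bar> \<le> int r" using hi by (auto simp: ys_def in_set_conv_nth)
  have R: "ReachB r (False, xs ! (d - 1), xs ! d) ys"
    using ysne last hdy h0 hd sety d by (auto simp: lys) (metis last sety last_in_set ysne)
  have pb: "\<bar>xs ! (d - 1)\<bar> \<le> int r" using sety last ysne by (metis last_in_set)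
  have a: "acc r (False, xs ! (d - 1), xs ! d)"
    using hd c1 c2 pb by auto
  have "accepts r (True,0,0) (twd xs)" unfolding accepts_iff using R a xs by metis
  moreover have "x = twd xs @ replicate (cntT (twd xs)) Ti" using x by (simp add: cword_def cntT_twd)
  ultimately show ?thesis by blast
qed

lemma Co_sup: "accepts r (True,0,0) w \<Longrightarrow> w @ replicate (cntT w) Ti \<in> Co r"
proof -
  assume "accepts r (True,0,0) w"
  then obtain ys f p c where w: "w = twd (ys @ [c])" and R: "ReachB r (f,p,c) ys" and a: "acc r (f,p,c)"
    unfolding accepts_iff by blast
  show ?thesis
  proof (cases "ys = []")
    case True
    then have "w = apow c" "f" "\<bar>c\<bar> \<le> int r + 1" using w R by auto
    then show ?thesis unfolding Co_def by (cases "c = 0") auto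
  next
    case False
    define xs where "xs = ys @ [c]"
    define d where "d = length ys"
    have e: "\<not> f" "p = last ys" "hd ys \<noteq> 0" "\<forall>y\<in>set ys. \<bar>y\<bar> \<le> int r" "\<bar>c\<bar> \<le> int r + 1"
      using R False by auto
    have a2: "c \<noteq> 0" "p = int r \<longrightarrow> c \<noteq> -1" "p = - int r \<longrightarrow> c \<noteq> 1" using a e by auto
    have l: "length xs = d + 1" "1 \<le> d" using False by (auto simp: xs_def d_def Suc_le_eq)
    have x0: "xs ! 0 \<noteq> 0" using e False by (simp add: xs_def nth_append hd_conv_nth)
    have xd: "xs ! d = c" by (simp add: xs_def d_def)
    have xd1: "xs ! (d - 1) = p" using e False by (simp add: xs_def d_def nth_append last_conv_nth)
    have xi: "\<forall>i<d. \<bar>xs ! i\<bar> \<le> int r" using e by (auto simp: xs_def d_def nth_append)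
    have "w @ replicate (cntT w) Ti = cword xs" using w by (simp add: cword_def cntT_twd xs_def)
    then show ?thesis unfolding Co_def using l x0 xd xd1 xi a2 e(5)
      by (intro UnI2 CollectI exI[of _ xs] exI[of _ d]) auto
  qed
qed

lemma part1: "unambiguous_cfl (Co r)"
proof -
  have "lang (GG r) = Co r"
    unfolding lang_GG using Co_sub Co_sup by blast
  then show ?thesis unfolding unambiguous_cfl_def using unamb_GG P_finite
    by (intro exI[of _ "GG r"]) (simp add: GG_def)
qed



definition rsum :: "nat \<Rightarrow> nat \<Rightarrow> (nat \<Rightarrow> int) \<Rightarrow> int" where
  "rsum k D f = (\<Sum>j\<le>D. f j * int k ^ j)"

definition rabs :: "nat \<Rightarrow> (nat \<Rightarrow> int) \<Rightarrow> nat" where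
  "rabs D f = (\<Sum>j\<le>D. nat \<bar>f j\<bar>)"

lemma rsum_Suc_shift: "rsum k (Suc D) f = f 0 + int k * rsum k D (\<lambda>j. f (Suc j))"
  unfolding rsum_def sum.atMost_Suc_shift by (simp add: sum_distrib_left algebra_simps)

lemma rabs_Suc_shift: "rabs (Suc D) f = nat \<bar>f 0\<bar> + rabs D (\<lambda>j. f (Suc j))"
  unfolding rabs_def sum.atMost_Suc_shift by simp

lemma rsum_add_at: "j0 \<le> D \<Longrightarrow> rsum k D (\<lambda>j. f j + (if j = j0 then a else 0)) = rsum k D f + a * int k ^ j0"
proof -
  assume j0: "j0 \<le> D"
  have "(\<Sum>j\<le>D. (f j + (if j = j0 then a else 0)) * int k ^ j) = (\<Sum>j\<le>D. f j * int k ^ j + (if j = j0 then a * int k ^ j else 0))"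
    by (rule sum.cong) (auto simp: distrib_right)
  also have "\<dots> = (\<Sum>j\<le>D. f j * int k ^ j) + (\<Sum>j\<le>D. (if j = j0 then a * int k ^ j else 0))"
    by (rule sum.distrib)
  also have "(\<Sum>j\<le>D. (if j = j0 then a * int k ^ j else 0)) = a * int k ^ j0"
    using j0 by (simp add: sum.delta)
  finally show ?thesis unfolding rsum_def by simp
qed

lemma rabs_add_at: "rabs D (\<lambda>j. f j + (if j = j0 then a else 0)) \<le> rabs D f + nat \<bar>a\<bar>"
proof -
  have "rabs D (\<lambda>j. f j + (if j = j0 then a else 0)) \<le> (\<Sum>j\<le>D. nat \<bar>f j\<bar> + (if j = j0 then nat \<bar>a\<bar> else 0))"
    unfolding rabs_def by (intro sum_mono) auto
  also have "\<dots> \<le> rabs D f + nat \<bar>a\<bar>"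
    unfolding rabs_def by (simp add: sum.distrib sum.delta)
  finally show ?thesis .
qed

lemma bmul_assoc: "k \<noteq> 0 \<Longrightarrow> bmul k (bmul k g h) l = bmul k g (bmul k h l)"
  by (simp add: bmul_def power_int_add algebra_simps)

lemma beval_append: "k \<noteq> 0 \<Longrightarrow> beval k (u @ v) = bmul k (beval k u) (beval k v)"
proof (induction u)
  case Nil
  then show ?case by (simp add: bmul_def)
next
  case (Cons g u)
  then show ?case by (simp add: bmul_assoc)
qed

lemma word_rep:
  assumes k: "k \<noteq> 0"
  shows "beval k w = (x, m) \<Longrightarrow> \<exists>lo D f. lo \<le> 0 \<and> lo \<le> m \<and> m \<le> lo + int D \<and> 0 \<le> lo + int D \<and>
     x = (of_nat k :: rat) powi lo * of_int (rsum k D f) \<and> int (rabs D f) + 2 * int D \<le> int (length w) + \<bar>m\<bar>"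
proof (induction w arbitrary: x m)
  case Nil
  then show ?case
    by (intro exI[of _ 0] exI[of _ 0] exI[of _ "\<lambda>_. 0"]) (auto simp: rsum_def rabs_def)
next
  case (Cons g w)
  obtain x' m' where bw: "beval k w = (x', m')" by (cases "beval k w") auto
  from Cons.IH[OF bw] obtain lo D f where H: "lo \<le> 0" "lo \<le> m'" "m' \<le> lo + int D" "0 \<le> lo + int D"
     "x' = (of_nat k :: rat) powi lo * of_int (rsum k D f)" "int (rabs D f) + 2 * int D \<le> int (length w) + \<bar>m'\<bar>"
    by blast
  have kq: "(of_nat k :: rat) \<noteq> 0" using k by simp
  show ?case
  proof (cases g)
    case A
    have e: "x = 1 + x'" "m = m'" using Cons.prems bw A by (auto simp: bmul_def)
    define j0 where "j0 = nat (- lo)"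
    have j0: "j0 \<le> D" using H by (simp add: j0_def)
    have pw: "(of_nat k :: rat) powi lo * of_int (int k ^ j0) = 1"
      using H kq by (simp add: j0_def power_int_minus flip: power_int_of_nat)
    define f' where "f' = (\<lambda>j. f j + (if j = j0 then 1 else 0))"
    have "x = (of_nat k :: rat) powi lo * of_int (rsum k D f')"
      using e H pw rsum_add_at[OF j0, of k f 1] by (simp add: f'_def algebra_simps)
    moreover have "int (rabs D f') \<le> int (rabs D f) + 1" using rabs_add_at[of D f j0 1] by (simp add: f'_def)
    ultimately show ?thesis using H e by (intro exI[of _ lo] exI[of _ D] exI[of _ f']) auto
  next
    case Ai
    have e: "x = -1 + x'" "m = m'" using Cons.prems bw Ai by (auto simp: bmul_def)
    define j0 where "j0 = nat (- lo)"
    have j0: "j0 \<le> D" using H by (simp add: j0_def)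
    have pw: "(of_nat k :: rat) powi lo * of_int (int k ^ j0) = 1"
      using H kq by (simp add: j0_def power_int_minus flip: power_int_of_nat)
    define f' where "f' = (\<lambda>j. f j + (if j = j0 then -1 else 0))"
    have rs: "rsum k D f' = rsum k D f - int k ^ j0" using rsum_add_at[OF j0, of k f "-1"] by (simp add: f'_def)
    have "x = (of_nat k :: rat) powi lo * of_int (rsum k D f')"
      using e H pw unfolding rs by (simp add: algebra_simps)
    moreover have "int (rabs D f') \<le> int (rabs D f) + 1" using rabs_add_at[of D f j0 "-1"] by (simp add: f'_def)
    ultimately show ?thesis using H e by (intro exI[of _ lo] exI[of _ D] exI[of _ f']) auto
  next
    case T
    have e: "x = of_nat k * x'" "m = m' + 1" using Cons.prems bw T by (auto simp: bmul_def)
    show ?thesis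
    proof (cases "lo < 0")
      case True
      have "x = (of_nat k :: rat) powi (lo + 1) * of_int (rsum k D f)"
        using e H kq by (simp add: power_int_add)
      then show ?thesis using H e True by (intro exI[of _ "lo + 1"] exI[of _ D] exI[of _ f]) auto
    next
      case False
      then have lo: "lo = 0" using H by simp
      define f' where "f' = (\<lambda>j. if j = 0 then 0 else f (j - 1))"
      have rs: "rsum k (Suc D) f' = int k * rsum k D f" by (simp add: rsum_Suc_shift f'_def)
      have ra: "rabs (Suc D) f' = rabs D f" by (simp add: rabs_Suc_shift f'_def)
      have "x = (of_nat k :: rat) powi 0 * of_int (rsum k (Suc D) f')"
        using e H lo rs by simp
      then show ?thesis using H e lo ra by (intro exI[of _ 0] exI[of _ "Suc D"] exI[of _ f']) auto
    qed
  next
    case Ti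
    have e: "x = (of_nat k) powi (-1) * x'" "m = m' - 1" using Cons.prems bw Ti by (auto simp: bmul_def)
    show ?thesis
    proof (cases "0 < lo + int D")
      case True
      have "x = (of_nat k :: rat) powi (lo - 1) * of_int (rsum k D f)"
        using e H kq by (simp add: power_int_diff power_int_minus field_simps)
      then show ?thesis using H e True by (intro exI[of _ "lo - 1"] exI[of _ D] exI[of _ f]) auto
    next
      case False
      then have hi: "lo + int D = 0" using H by simp
      define f' where "f' = (\<lambda>j. if j \<le> D then f j else 0)"
      have rs: "rsum k (Suc D) f' = rsum k D f" by (simp add: rsum_def f'_def)
      have ra: "rabs (Suc D) f' = rabs D f" by (simp add: rabs_def f'_def)
      have "x = (of_nat k :: rat) powi (lo - 1) * of_int (rsum k (Suc D) f')"
        using e H kq rs by (simp add: power_int_diff power_int_minus field_simps)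
      then show ?thesis using H e hi ra by (intro exI[of _ "lo - 1"] exI[of _ "Suc D"] exI[of _ f']) auto
    qed
  qed
qed


definition cost :: "nat \<Rightarrow> int \<Rightarrow> nat" where
  "cost k N = (LEAST c. \<exists>D f. rsum k D f = N \<and> c = rabs D f + 2 * D)"

lemma cost_le: "rsum k D f = N \<Longrightarrow> cost k N \<le> rabs D f + 2 * D"
  unfolding cost_def by (rule Least_le) blast

lemma cost_ex: "\<exists>D f. rsum k D f = N \<and> cost k N = rabs D f + 2 * D"
proof -
  have "\<exists>c D f. rsum k D f = N \<and> c = rabs D f + 2 * D"
    by (intro exI[of _ "rabs 0 (\<lambda>_. N)"] exI[of _ 0] exI[of _ "\<lambda>_. N"]) (simp add: rsum_def)
  then obtain c where "\<exists>D f. rsum k D f = N \<and> c = rabs D f + 2 * D" by blast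
  from LeastI[of "\<lambda>c. \<exists>D f. rsum k D f = N \<and> c = rabs D f + 2 * D", OF this] show ?thesis
    unfolding cost_def by blast
qed

lemma cost_abs: "cost k N \<le> nat \<bar>N\<bar>"
  using cost_le[of k 0 "\<lambda>_. N" N] by (simp add: rsum_def rabs_def)

lemma cost_0[simp]: "cost k 0 = 0"
  using cost_abs[of k 0] by simp

lemma cost_shift: "cost k (b + int k * M) \<le> nat \<bar>b\<bar> + 2 + cost k M"
proof -
  obtain D f where f: "rsum k D f = M" "cost k M = rabs D f + 2 * D" using cost_ex by blast
  define f' where "f' = (\<lambda>j. if j = 0 then b else f (j - 1))"
  have "rsum k (Suc D) f' = b + int k * M" using f by (simp add: rsum_Suc_shift f'_def)
  moreover have "rabs (Suc D) f' = nat \<bar>b\<bar> + rabs D f" by (simp add: rabs_Suc_shift f'_def)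
  ultimately show ?thesis using cost_le[of k "Suc D" f' "b + int k * M"] f by simp
qed

lemma cost_addc: "cost k (M + g) \<le> cost k M + nat \<bar>g\<bar>"
proof -
  obtain D f where f: "rsum k D f = M" "cost k M = rabs D f + 2 * D" using cost_ex by blast
  define f' where "f' = (\<lambda>j. f j + (if j = 0 then g else 0))"
  have "rsum k D f' = M + g" using f rsum_add_at[of 0 D k f g] by (simp add: f'_def)
  moreover have "rabs D f' \<le> rabs D f + nat \<bar>g\<bar>" using rabs_add_at[of D f 0 g] by (simp add: f'_def)
  ultimately show ?thesis using cost_le[of k D f' "M + g"] f by simp
qed

lemma cost_cases: "cost k N = nat \<bar>N\<bar> \<or> (\<exists>f0 M0. N = f0 + int k * M0 \<and> nat \<bar>f0\<bar> + 2 + cost k M0 \<le> cost k N)"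
proof -
  obtain D f where f: "rsum k D f = N" "cost k N = rabs D f + 2 * D" using cost_ex by blast
  show ?thesis
  proof (cases D)
    case 0
    then show ?thesis using f by (simp add: rsum_def rabs_def)
  next
    case (Suc D')
    define M0 where "M0 = rsum k D' (\<lambda>j. f (Suc j))"
    have N: "N = f 0 + int k * M0" using f Suc by (simp add: rsum_Suc_shift M0_def)
    have "cost k M0 \<le> rabs D' (\<lambda>j. f (Suc j)) + 2 * D'" using cost_le M0_def by metis
    then have "nat \<bar>f 0\<bar> + 2 + cost k M0 \<le> cost k N" using f Suc by (simp add: rabs_Suc_shift)
    then show ?thesis using N by blast
  qed
qed

lemma abs_rsum: "1 \<le> k \<Longrightarrow> \<bar>rsum k D f\<bar> \<le> int (rabs D f) * int k ^ D"
proof -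
  assume k: "1 \<le> k"
  have "\<bar>rsum k D f\<bar> \<le> (\<Sum>j\<le>D. \<bar>f j * int k ^ j\<bar>)" unfolding rsum_def by (rule sum_abs)
  also have "\<dots> \<le> (\<Sum>j\<le>D. \<bar>f j\<bar> * int k ^ D)"
  proof (rule sum_mono)
    fix j assume "j \<in> {..D}"
    then have "int k ^ j \<le> int k ^ D" using k by (intro power_increasing) auto
    then show "\<bar>f j * int k ^ j\<bar> \<le> \<bar>f j\<bar> * int k ^ D" by (simp add: abs_mult mult_left_mono)
  qed
  also have "\<dots> = int (rabs D f) * int k ^ D" unfolding rabs_def by (simp add: sum_distrib_right)
  finally show ?thesis .
qed

lemma cost_bound: "1 \<le> k \<Longrightarrow> \<bar>N\<bar> \<le> int (cost k N) * int k ^ (cost k N)"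
proof -
  assume k: "1 \<le> k"
  obtain D f where f: "rsum k D f = N" "cost k N = rabs D f + 2 * D" using cost_ex by blast
  have "\<bar>N\<bar> \<le> int (rabs D f) * int k ^ D" using abs_rsum[OF k] f by metis
  also have "\<dots> \<le> int (cost k N) * int k ^ (cost k N)"
    using f k by (intro mult_mono power_increasing) auto
  finally show ?thesis .
qed

lemma finite_cost: "1 \<le> k \<Longrightarrow> finite {N. cost k N = n}"
proof -
  assume k: "1 \<le> k"
  have "{N. cost k N = n} \<subseteq> {- (int n * int k ^ n) .. int n * int k ^ n}"
  proof
    fix N assume "N \<in> {N. cost k N = n}"
    then have "\<bar>N\<bar> \<le> int n * int k ^ n" using cost_bound[OF k, of N] by simp
    then show "N \<in> {- (int n * int k ^ n) .. int n * int k ^ n}" by (simp add: abs_le_iff)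
  qed
  then show ?thesis using finite_subset by blast
qed


lemma L_mul_ge: "(0::int) \<le> R \<Longrightarrow> 1 \<le> g \<Longrightarrow> R \<le> R * g"
  using mult_left_mono[of 1 g R] by simp

lemma L_mul_ge2: "(0::int) \<le> R \<Longrightarrow> 2 \<le> g \<Longrightarrow> 2 * R \<le> R * g"
  using mult_left_mono[of 2 g R] by (simp add: mult.commute)

lemma L1: "\<bar>b\<bar> \<le> (R::int) \<Longrightarrow> \<bar>b\<bar> + \<bar>g\<bar> \<le> \<bar>b + (2*R+1)*g\<bar>"
proof -
  assume b: "\<bar>b\<bar> \<le> R"
  then have bb: "-R \<le> b" "b \<le> R" by auto
  have e: "(2*R+1)*g = 2*(R*g) + g" by (simp add: algebra_simps)
  consider "g = 0" | "1 \<le> g" | "g \<le> -1" by linarith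
  then show ?thesis
  proof cases
    case 2 then have m: "R \<le> R*g" using L_mul_ge[of R g] b by simp
    have pos: "0 \<le> b + (2*R+1)*g" using bb e m 2 by linarith
    show ?thesis using abs_of_nonneg[OF pos] b e m 2 by linarith
  next
    case 3 then have m: "R \<le> R*(-g)" using L_mul_ge[of R "-g"] b by simp
    have neg: "b + (2*R+1)*g \<le> 0" using bb e m 3 by (simp add: algebra_simps) 
    show ?thesis using abs_of_nonpos[OF neg] b e m 3 by (simp add: algebra_simps) 
  qed simp
qed

lemma L2: "\<bar>b\<bar> \<le> (R::int) \<Longrightarrow> 1 \<le> R \<Longrightarrow> R + 1 < \<bar>b + (2*R+1)*M\<bar> \<Longrightarrow> \<bar>b\<bar> + 2 + \<bar>M\<bar> \<le> \<bar>b + (2*R+1)*M\<bar>"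
proof -
  assume b: "\<bar>b\<bar> \<le> R" and R: "1 \<le> R" and N: "R + 1 < \<bar>b + (2*R+1)*M\<bar>"
  then have bb: "-R \<le> b" "b \<le> R" by auto
  have e: "(2*R+1)*M = 2*(R*M) + M" by (simp add: algebra_simps)
  consider "M = 0" | "M = 1" | "M = -1" | "2 \<le> M" | "M \<le> -2" by linarith
  then show ?thesis
  proof cases
    case 1 then show ?thesis using N b by simp
  next
    case 2 then show ?thesis using N bb R by (simp add: abs_if split: if_splits)
  next
    case 3 then show ?thesis using N bb R by (simp add: abs_if split: if_splits)
  next
    case 4 then have m: "2*R \<le> R*M" using L_mul_ge2[of R M] R by simp
    have pos: "0 \<le> b + (2*R+1)*M" using bb e m 4 R by linarith
    have aM: "\<bar>M\<bar> = M" using 4 by simp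
    show ?thesis using abs_of_nonneg[OF pos] b e m 4 R aM by linarith
  next
    case 5 then have m: "2*R \<le> R*(-M)" using L_mul_ge2[of R "-M"] R by simp
    have m': "R*(-M) = -(R*M)" by simp
    have neg: "b + (2*R+1)*M \<le> 0" using bb e m m' 5 R by linarith
    have aM: "\<bar>M\<bar> = -M" using 5 by simp
    show ?thesis using abs_of_nonpos[OF neg] b e m m' 5 R aM by linarith
  qed
qed

lemma L3: "\<bar>N\<bar> \<le> (R::int) + 1 \<Longrightarrow> N = f0 + (2*R+1)*M0 \<Longrightarrow> M0 \<noteq> 0 \<Longrightarrow> 0 \<le> R \<Longrightarrow> \<bar>N\<bar> < \<bar>f0\<bar> + 2"
proof -
  assume a: "\<bar>N\<bar> \<le> R + 1" "N = f0 + (2*R+1)*M0" "M0 \<noteq> 0" "0 \<le> R"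
  then have nn: "-R - 1 \<le> N" "N \<le> R + 1" by auto
  have e: "(2*R+1)*M0 = 2*(R*M0) + M0" by (simp add: algebra_simps)
  have f: "f0 \<le> \<bar>f0\<bar>" "-f0 \<le> \<bar>f0\<bar>" by auto
  consider "1 \<le> M0" | "M0 \<le> -1" using a by linarith
  then show ?thesis
  proof cases
    case 1 then have m: "R \<le> R*M0" using L_mul_ge[of R M0] a by simp
    show ?thesis using a nn e 1 m f by linarith
  next
    case 2 then have m: "R \<le> R*(-M0)" using L_mul_ge[of R "-M0"] a by simp
    have m': "R*(-M0) = -(R*M0)" by simp
    show ?thesis using a nn e 2 m m' f by linarith
  qed
qed

lemma L4: "M \<noteq> 0 \<Longrightarrow> 1 \<le> (R::int) \<Longrightarrow> \<bar>M\<bar> + 2 \<le> \<bar>(2*R+1)*M\<bar>"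
proof -
  assume M: "M \<noteq> 0" and R: "1 \<le> R"
  have m: "R \<le> R * \<bar>M\<bar>" using L_mul_ge[of R "\<bar>M\<bar>"] M R by simp
  have "\<bar>(2*R+1)*M\<bar> = (2*R+1)*\<bar>M\<bar>" using R by (simp add: abs_mult)
  also have "\<dots> = 2*(R*\<bar>M\<bar>) + \<bar>M\<bar>" by (simp add: algebra_simps)
  finally show ?thesis using m R by linarith
qed

lemma L5: "\<bar>b\<bar> \<le> (R::int) \<Longrightarrow> 2 \<le> \<bar>M\<bar> \<Longrightarrow> 0 \<le> R \<Longrightarrow> R + 1 < \<bar>b + (2*R+1)*M\<bar>"
proof -
  assume b: "\<bar>b\<bar> \<le> R" and M: "2 \<le> \<bar>M\<bar>" and R: "0 \<le> R"
  then have bb: "-R \<le> b" "b \<le> R" by auto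
  have e: "(2*R+1)*M = 2*(R*M) + M" by (simp add: algebra_simps)
  have x: "b + (2*R+1)*M \<le> \<bar>b + (2*R+1)*M\<bar>" "-(b + (2*R+1)*M) \<le> \<bar>b + (2*R+1)*M\<bar>" by auto
  consider "2 \<le> M" | "M \<le> -2" using M by linarith
  then show ?thesis
  proof cases
    case 1 then have m: "2*R \<le> R*M" using L_mul_ge2[of R M] R by simp
    show ?thesis using bb e R 1 m x by linarith
  next
    case 2 then have m: "2*R \<le> R*(-M)" using L_mul_ge2[of R "-M"] R by simp
    have m': "R*(-M) = -(R*M)" by simp
    show ?thesis using bb e R 2 m m' x by linarith
  qed
qed


definition bres :: "nat \<Rightarrow> int \<Rightarrow> int" where
  "bres r N = (N + int r) mod (2 * int r + 1) - int r"

definition mres :: "nat \<Rightarrow> int \<Rightarrow> int" where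
  "mres r N = (N + int r) div (2 * int r + 1)"

lemma bres_decomp: "N = bres r N + (2 * int r + 1) * mres r N"
  unfolding bres_def mres_def using div_mult_mod_eq[of "N + int r" "2 * int r + 1"] by (simp add: algebra_simps)

lemma bres_bound: "\<bar>bres r N\<bar> \<le> int r"
proof -
  have "0 \<le> (N + int r) mod (2 * int r + 1)" "(N + int r) mod (2 * int r + 1) < 2 * int r + 1"
    using pos_mod_bound[of "2 * int r + 1" "N + int r"] pos_mod_sign[of "2 * int r + 1" "N + int r"] by auto
  then show ?thesis unfolding bres_def by linarith
qed

lemma bres_unique: "\<bar>b\<bar> \<le> int r \<Longrightarrow> bres r (b + (2 * int r + 1) * M) = b \<and> mres r (b + (2 * int r + 1) * M) = M"
proof -
  assume b: "\<bar>b\<bar> \<le> int r"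
  have e: "b + (2 * int r + 1) * M + int r = (b + int r) + (2 * int r + 1) * M" by simp
  have "(b + int r) mod (2 * int r + 1) = b + int r" using b by (intro mod_pos_pos_trivial) auto
  moreover have "(b + int r) div (2 * int r + 1) = 0" using b by (intro div_pos_pos_trivial) auto
  ultimately show ?thesis unfolding bres_def mres_def e by simp
qed

lemma bres_zero: "bres r N = 0 \<longleftrightarrow> (2 * int r + 1) dvd N"
proof
  assume "bres r N = 0"
  then have "N = (2 * int r + 1) * mres r N" using bres_decomp[of N r] by simp
  then show "(2 * int r + 1) dvd N" by (metis dvd_triv_left)
next
  assume "(2 * int r + 1) dvd N"
  then obtain t where "N = (2 * int r + 1) * t" by blast
  then show "bres r N = 0" using bres_unique[of 0 r t] by simp
qed

context
  fixes r k :: nat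
  assumes r1: "1 \<le> r" and kdef: "k = 2 * r + 1"
begin

lemma ik: "int k = 2 * int r + 1" using kdef by simp

lemma cost_mult: "M \<noteq> 0 \<Longrightarrow> cost k (int k * M) = cost k M + 2"
proof -
  assume M: "M \<noteq> 0"
  have le: "cost k (int k * M) \<le> cost k M + 2" using cost_shift[of k 0 M] by simp
  have "cost k M + 2 \<le> cost k (int k * M)"
  proof (cases "cost k (int k * M) = nat \<bar>int k * M\<bar>")
    case True
    have "\<bar>M\<bar> + 2 \<le> \<bar>int k * M\<bar>" using L4[OF M, of "int r"] r1 ik by simp
    moreover have "int (cost k M) \<le> \<bar>M\<bar>" using cost_abs[of k M] by linarith
    ultimately show ?thesis using True by linarith
  next
    case False
    then obtain f0 M0 where f: "int k * M = f0 + int k * M0" "nat \<bar>f0\<bar> + 2 + cost k M0 \<le> cost k (int k * M)"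
      using cost_cases[of k "int k * M"] by blast
    define g where "g = M - M0"
    have f0: "f0 = int k * g" using f(1) by (simp add: g_def algebra_simps)
    have "cost k M \<le> cost k M0 + nat \<bar>g\<bar>" using cost_addc[of k M0 g] by (simp add: g_def)
    moreover have "\<bar>g\<bar> \<le> \<bar>f0\<bar>"
    proof -
      have "1 * \<bar>g\<bar> \<le> (2 * int r + 1) * \<bar>g\<bar>" by (intro mult_right_mono) auto
      then show ?thesis unfolding f0 using ik by (simp add: abs_mult)
    qed
    ultimately show ?thesis using f(2) by linarith
  qed
  then show ?thesis using le by simp
qed

lemma cost_small: "\<bar>N\<bar> \<le> int r + 1 \<Longrightarrow> cost k N = nat \<bar>N\<bar>"
proof -
  assume N: "\<bar>N\<bar> \<le> int r + 1"
  have "nat \<bar>N\<bar> \<le> cost k N"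
  proof (cases "cost k N = nat \<bar>N\<bar>")
    case False
    then obtain f0 M0 where f: "N = f0 + int k * M0" "nat \<bar>f0\<bar> + 2 + cost k M0 \<le> cost k N"
      using cost_cases[of k N] by blast
    show ?thesis
    proof (cases "M0 = 0")
      case True then show ?thesis using f by simp
    next
      case False
      then have "\<bar>N\<bar> < \<bar>f0\<bar> + 2" using L3[OF N _ False] f(1) ik by simp
      then show ?thesis using f(2) by linarith
    qed
  qed simp
  then show ?thesis using cost_abs[of k N] by simp
qed

lemma cost_pow: "N \<noteq> 0 \<Longrightarrow> cost k (int k ^ e * N) = cost k N + 2 * e"
proof (induction e)
  case (Suc e)
  have "int k ^ e * N \<noteq> 0" using Suc.prems kdef by simp
  then have "cost k (int k * (int k ^ e * N)) = cost k (int k ^ e * N) + 2" by (rule cost_mult)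
  then show ?case using Suc by (simp add: algebra_simps)
qed simp

lemma cost_rec: "\<not> int k dvd N \<Longrightarrow> int r + 1 < \<bar>N\<bar> \<Longrightarrow> cost k N = nat \<bar>bres r N\<bar> + 2 + cost k (mres r N)"
proof -
  assume nd: "\<not> int k dvd N" and big: "int r + 1 < \<bar>N\<bar>"
  define b where "b = bres r N"
  define M where "M = mres r N"
  have N: "N = b + int k * M" using bres_decomp[of N r] ik by (simp add: b_def M_def)
  have bb: "\<bar>b\<bar> \<le> int r" using bres_bound by (simp add: b_def)
  have le: "cost k N \<le> nat \<bar>b\<bar> + 2 + cost k M" using cost_shift[of k b M] N by simp
  have "nat \<bar>b\<bar> + 2 + cost k M \<le> cost k N"
  proof (cases "cost k N = nat \<bar>N\<bar>")
    case True
    have "\<bar>b\<bar> + 2 + \<bar>M\<bar> \<le> \<bar>N\<bar>" using L2[OF bb _, of M] r1 big N ik by simp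
    moreover have "int (cost k M) \<le> \<bar>M\<bar>" using cost_abs[of k M] by linarith
    ultimately show ?thesis using True by linarith
  next
    case False
    then obtain f0 M0 where f: "N = f0 + int k * M0" "nat \<bar>f0\<bar> + 2 + cost k M0 \<le> cost k N"
      using cost_cases[of k N] by blast
    define g where "g = M - M0"
    have f0: "f0 = b + int k * g" using f(1) N by (simp add: g_def algebra_simps)
    have "cost k M \<le> cost k M0 + nat \<bar>g\<bar>" using cost_addc[of k M0 g] by (simp add: g_def)
    moreover have "\<bar>b\<bar> + \<bar>g\<bar> \<le> \<bar>f0\<bar>" unfolding f0 using L1[OF bb, of g] ik by simp
    ultimately show ?thesis using f(2) by linarith
  qed
  then show ?thesis using le by (simp add: b_def M_def)
qed

end


definition Call :: "nat \<Rightarrow> nat \<Rightarrow> nat" where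
  "Call k n = card {N::int. cost k N = n}"

definition cN :: "nat \<Rightarrow> nat \<Rightarrow> nat" where
  "cN k n = card {N::int. \<not> int k dvd N \<and> cost k N = n}"

definition Bs :: "nat \<Rightarrow> int set" where
  "Bs r = {- int r .. int r} - {0}"

context
  fixes r k :: nat
  assumes r1: "1 \<le> r" and kdef: "k = 2 * r + 1"
begin

lemma k1: "1 \<le> k" using kdef by simp

lemma R1: "3 \<le> n \<Longrightarrow> Call k n = cN k n + Call k (n - 2)"
proof -
  assume n: "3 \<le> n"
  define A where "A = {N::int. \<not> int k dvd N \<and> cost k N = n}"
  define B where "B = (\<lambda>M. int k * M) ` {M. cost k M = n - 2}"
  have ik: "int k = 2 * int r + 1" using kdef by simp
  have S: "{N::int. cost k N = n} = A \<union> B"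
  proof (intro equalityI subsetI)
    fix N assume "N \<in> {N::int. cost k N = n}"
    then have c: "cost k N = n" by simp
    show "N \<in> A \<union> B"
    proof (cases "int k dvd N")
      case True
      then obtain M where M: "N = int k * M" by blast
      have "N \<noteq> 0" using c n by auto
      then have "M \<noteq> 0" using M by simp
      then have "cost k M = n - 2" using cost_mult[OF r1 kdef, of M] c M by simp
      then show ?thesis using M by (auto simp: B_def)
    next
      case False then show ?thesis using c by (simp add: A_def)
    qed
  next
    fix N assume "N \<in> A \<union> B"
    then show "N \<in> {N::int. cost k N = n}"
    proof
      assume "N \<in> A" then show ?thesis by (simp add: A_def)
    next
      assume "N \<in> B"
      then obtain M where M: "N = int k * M" "cost k M = n - 2" by (auto simp: B_def)
      then have "M \<noteq> 0" using n by auto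
      then show ?thesis using cost_mult[OF r1 kdef, of M] M n by simp
    qed
  qed
  have fA: "finite A" unfolding A_def by (rule finite_subset[OF _ finite_cost[OF k1, of n]]) auto
  have fB: "finite B" unfolding B_def using finite_cost[OF k1] by simp
  have dj: "A \<inter> B = {}" by (auto simp: A_def B_def)
  have cB: "card B = Call k (n - 2)" unfolding B_def Call_def
    by (rule card_image) (use kdef in \<open>auto simp: inj_on_def\<close>)
  show ?thesis unfolding Call_def[of k n] S using card_Un_disjoint[OF fA fB dj] cB by (simp add: A_def cN_def)
qed

lemma Bs_finite: "finite (Bs r)" by (simp add: Bs_def)

lemma Bs_bound: "b \<in> Bs r \<Longrightarrow> nat \<bar>b\<bar> \<le> r \<and> b \<noteq> 0 \<and> \<bar>b\<bar> \<le> int r"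
  by (auto simp: Bs_def)

lemma R2: "r + 4 \<le> n \<Longrightarrow> cN k n = (\<Sum>b\<in>Bs r. Call k (n - 2 - nat \<bar>b\<bar>))"
proof -
  assume n: "r + 4 \<le> n"
  have ik: "int k = 2 * int r + 1" using kdef by simp
  define F where "F = (\<lambda>b. (\<lambda>M. b + int k * M) ` {M. cost k M = n - 2 - nat \<bar>b\<bar>})"
  have S: "{N::int. \<not> int k dvd N \<and> cost k N = n} = (\<Union>b\<in>Bs r. F b)"
  proof (intro equalityI subsetI)
    fix N assume "N \<in> {N::int. \<not> int k dvd N \<and> cost k N = n}"
    then have nd: "\<not> int k dvd N" and c: "cost k N = n" by auto
    have big: "int r + 1 < \<bar>N\<bar>"
    proof (rule ccontr)
      assume "\<not> int r + 1 < \<bar>N\<bar>"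
      then have "cost k N = nat \<bar>N\<bar>" using cost_small[OF r1 kdef] by simp
      then show False using c n \<open>\<not> int r + 1 < \<bar>N\<bar>\<close> by linarith
    qed
    define b where "b = bres r N"
    have b0: "b \<noteq> 0" using bres_zero[of r N] nd ik by (simp add: b_def)
    have bB: "b \<in> Bs r" using bres_bound[of r N] b0 by (auto simp: Bs_def b_def)
    have cr: "cost k N = nat \<bar>b\<bar> + 2 + cost k (mres r N)" using cost_rec[OF r1 kdef nd big] by (simp add: b_def)
    have "N = b + int k * mres r N" using bres_decomp[of N r] ik by (simp add: b_def)
    moreover have "cost k (mres r N) = n - 2 - nat \<bar>b\<bar>" using cr c by simp
    ultimately have "N \<in> F b" by (auto simp: F_def)
    then show "N \<in> (\<Union>b\<in>Bs r. F b)" using bB by blast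
  next
    fix N assume "N \<in> (\<Union>b\<in>Bs r. F b)"
    then obtain b M where bB: "b \<in> Bs r" and N: "N = b + int k * M" and cM: "cost k M = n - 2 - nat \<bar>b\<bar>"
      by (auto simp: F_def)
    have bb: "nat \<bar>b\<bar> \<le> r" "b \<noteq> 0" "\<bar>b\<bar> \<le> int r" using Bs_bound[OF bB] by auto
    have c2: "2 \<le> cost k M" using cM bb n by linarith
    have M2: "2 \<le> \<bar>M\<bar>"
    proof (rule ccontr)
      assume "\<not> 2 \<le> \<bar>M\<bar>"
      then have "cost k M \<le> 1" using cost_abs[of k M] by linarith
      then show False using c2 by simp
    qed
    have bu: "bres r N = b \<and> mres r N = M" using bres_unique[OF bb(3), of M] N ik by simp
    have nd: "\<not> int k dvd N" using bres_zero[of r N] bu bb ik by simp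
    have big: "int r + 1 < \<bar>N\<bar>" using L5[OF bb(3) M2] N ik by simp
    have "cost k N = n" using cost_rec[OF r1 kdef nd big] bu cM bb n by simp
    then show "N \<in> {N::int. \<not> int k dvd N \<and> cost k N = n}" using nd by simp
  qed
  have fF: "\<forall>b\<in>Bs r. finite (F b)" unfolding F_def using finite_cost[OF k1] by simp
  have dj: "\<forall>b1\<in>Bs r. \<forall>b2\<in>Bs r. b1 \<noteq> b2 \<longrightarrow> F b1 \<inter> F b2 = {}"
  proof (intro ballI impI)
    fix b1 b2 assume b1: "b1 \<in> Bs r" and b2: "b2 \<in> Bs r" and ne: "b1 \<noteq> b2"
    show "F b1 \<inter> F b2 = {}"
    proof (rule ccontr)
      assume "F b1 \<inter> F b2 \<noteq> {}"
      then obtain M1 M2 where e: "b1 + int k * M1 = b2 + int k * M2" by (auto simp: F_def)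
      have "bres r (b1 + int k * M1) = b1" using bres_unique[of b1 r M1] Bs_bound[OF b1] ik by simp
      moreover have "bres r (b2 + int k * M2) = b2" using bres_unique[of b2 r M2] Bs_bound[OF b2] ik by simp
      ultimately show False using e ne by simp
    qed
  qed
  have cF: "card (F b) = Call k (n - 2 - nat \<bar>b\<bar>)" for b unfolding F_def Call_def
    by (rule card_image) (use kdef in \<open>auto simp: inj_on_def\<close>)
  show ?thesis unfolding cN_def S using card_UN_disjoint[OF Bs_finite fF dj] cF by simp
qed

lemma Rrec: "r + 6 \<le> n \<Longrightarrow> cN k n = cN k (n - 2) + (\<Sum>b\<in>Bs r. cN k (n - 2 - nat \<bar>b\<bar>))"
proof -
  assume n: "r + 6 \<le> n"
  have "cN k n = (\<Sum>b\<in>Bs r. Call k (n - 2 - nat \<bar>b\<bar>))" using R2 n by simp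
  also have "\<dots> = (\<Sum>b\<in>Bs r. cN k (n - 2 - nat \<bar>b\<bar>) + Call k (n - 2 - 2 - nat \<bar>b\<bar>))"
  proof (rule sum.cong)
    fix b assume "b \<in> Bs r"
    then have "nat \<bar>b\<bar> \<le> r" using Bs_bound by blast
    then have "3 \<le> n - 2 - nat \<bar>b\<bar>" "n - 2 - nat \<bar>b\<bar> - 2 = n - 2 - 2 - nat \<bar>b\<bar>" using n by auto
    then show "Call k (n - 2 - nat \<bar>b\<bar>) = cN k (n - 2 - nat \<bar>b\<bar>) + Call k (n - 2 - 2 - nat \<bar>b\<bar>)"
      using R1 by metis
  qed simp
  also have "\<dots> = (\<Sum>b\<in>Bs r. cN k (n - 2 - nat \<bar>b\<bar>)) + (\<Sum>b\<in>Bs r. Call k (n - 2 - 2 - nat \<bar>b\<bar>))"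
    by (rule sum.distrib)
  also have "(\<Sum>b\<in>Bs r. Call k (n - 2 - 2 - nat \<bar>b\<bar>)) = cN k (n - 2)" using R2[of "n - 2"] n by simp
  finally show ?thesis by simp
qed

end


lemma rational_rec:
  fixes c :: "nat \<Rightarrow> nat" and B :: "'b set" and e :: "'b \<Rightarrow> nat"
  assumes fB: "finite B" and eb: "\<forall>b\<in>B. 1 \<le> e b \<and> e b \<le> n0" and n02: "2 \<le> n0"
    and rec: "\<forall>n\<ge>n0. c n = c (n - 2) + (\<Sum>b\<in>B. c (n - e b))"
  shows "rational_series c"
proof -
  define q :: "int poly" where "q = 1 - monom 1 2 - (\<Sum>b\<in>B. monom 1 (e b))"
  define F :: "int fps" where "F = Abs_fps (\<lambda>n. int (c n))"
  have Fn: "fps_nth F n = int (c n)" for n by (simp add: F_def)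
  have Q: "fps_of_poly q = 1 - fps_X ^ 2 - (\<Sum>b\<in>B. fps_X ^ (e b))"
    by (simp add: q_def fps_of_poly_diff fps_of_poly_sum fps_of_poly_monom')
  have coef: "fps_nth (F * fps_of_poly q) n = int (c n) - (if 2 \<le> n then int (c (n - 2)) else 0)
       - (\<Sum>b\<in>B. if n < e b then 0 else int (c (n - e b)))" for n
    unfolding Q by (simp add: algebra_simps sum_distrib_left fps_sum_nth fps_X_power_mult_right_nth fps_X_power_mult_nth Fn cong: if_cong)
  have z: "fps_nth (F * fps_of_poly q) n = 0" if n: "n0 \<le> n" for n
  proof -
    have "(\<Sum>b\<in>B. if n < e b then 0 else int (c (n - e b))) = (\<Sum>b\<in>B. int (c (n - e b)))"
      using eb n by (intro sum.cong) auto
    then show ?thesis using coef[of n] rec n n02 by simp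
  qed
  define p :: "int poly" where "p = Poly (map (\<lambda>i. fps_nth (F * fps_of_poly q) i) [0..<n0])"
  have "F * fps_of_poly q = fps_of_poly p"
  proof (rule fps_ext)
    fix n
    show "fps_nth (F * fps_of_poly q) n = fps_nth (fps_of_poly p) n"
      using z[of n] by (cases "n < n0") (auto simp: p_def nth_default_def)
  qed
  moreover have "q \<noteq> 0"
  proof
    assume "q = 0"
    then have "fps_nth (fps_of_poly q) 0 = 0" by simp
    moreover have "(\<Sum>k\<in>B. if e k = 0 then 1 else 0) = (0::int)" using eb by (intro sum.neutral) auto
    then have "fps_nth (fps_of_poly q) 0 = 1" unfolding Q using eb by (simp add: fps_sum_nth)
    ultimately show False by simp
  qed
  ultimately show ?thesis unfolding rational_series_def F_def by blast
qed


definition cls :: "nat \<Rightarrow> int \<Rightarrow> bs set" where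
  "cls k N = {((of_nat k :: rat) powi j * of_int N, 0) | j. True}"

lemma beval_repT: "beval k (replicate n T) = (0, int n)"
  by (induction n) (auto simp: bmul_def)

lemma beval_repTi: "beval k (replicate n Ti) = (0, - int n)"
  by (induction n) (auto simp: bmul_def)

lemma zero_j_BSgrp: "(0, j) \<in> BSgrp k"
proof (cases "0 \<le> j")
  case True
  then have "beval k (replicate (nat j) T) = (0, j)" by (simp add: beval_repT)
  then show ?thesis unfolding BSgrp_def by (metis rangeI)
next
  case False
  then have "beval k (replicate (nat (-j)) Ti) = (0, j)" by (simp add: beval_repTi)
  then show ?thesis unfolding BSgrp_def by (metis rangeI)
qed

lemma beval_repA: "beval k (replicate n A) = (of_nat n, 0)"
  by (induction n) (auto simp: bmul_def)

lemma beval_repAi: "beval k (replicate n Ai) = (- of_nat n, 0)"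
  by (induction n) (auto simp: bmul_def)

lemma beval_apow: "beval k (apow x) = (of_int x, 0)"
  by (cases "0 \<le> x") (auto simp: apow_def beval_repA beval_repAi)

lemma conjcl_eq: "k \<noteq> 0 \<Longrightarrow> conjcl k (x, 0) = {((of_nat k :: rat) powi j * x, 0) | j. True}"
proof -
  assume k: "k \<noteq> 0"
  have kq: "(of_nat k :: rat) \<noteq> 0" using k by simp
  have c: "bmul k (bmul k (y, m) (x, 0)) (binv k (y, m)) = ((of_nat k :: rat) powi m * x, 0)" for y m
  proof -
    have "(of_nat k :: rat) powi m * (of_nat k) powi (-m) = 1" using kq by (simp add: power_int_minus)
    then show ?thesis by (simp add: bmul_def binv_def algebra_simps)
  qed
  show ?thesis
  proof (intro equalityI subsetI)
    fix z :: bs assume "z \<in> conjcl k (x, 0)"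
    then obtain h where h: "h \<in> BSgrp k" "z = bmul k (bmul k h (x, 0)) (binv k h)" unfolding conjcl_def by blast
    obtain y m where "h = (y, m)" by (cases h) auto
    then show "z \<in> {((of_nat k :: rat) powi j * x, 0) | j. True}" using h c by auto
  next
    fix z :: bs assume "z \<in> {((of_nat k :: rat) powi j * x, 0) | j. True}"
    then obtain j where z: "z = ((of_nat k :: rat) powi j * x, 0)" by blast
    have "z = bmul k (bmul k (0, j) (x, 0)) (binv k (0, j))" using c[of 0 j] z by simp
    then show "z \<in> conjcl k (x, 0)" unfolding conjcl_def using zero_j_BSgrp by blast
  qed
qed

lemma cls_conjcl: "k \<noteq> 0 \<Longrightarrow> cls k N = conjcl k (of_int N, 0)"
  by (simp add: conjcl_eq cls_def)

lemma cls_shift: "k \<noteq> 0 \<Longrightarrow> conjcl k ((of_nat k :: rat) powi t * of_int N, 0) = cls k N"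
proof -
  assume k: "k \<noteq> 0"
  have kq: "(of_nat k :: rat) \<noteq> 0" using k by simp
  have e: "(of_nat k :: rat) powi j * ((of_nat k) powi t * of_int N) = (of_nat k) powi (j + t) * of_int N" for j
    using kq by (simp add: power_int_add)
  show ?thesis unfolding conjcl_eq[OF k] cls_def e
  proof (intro equalityI subsetI)
    fix z :: bs assume "z \<in> {((of_nat k :: rat) powi (j + t) * of_int N, 0) | j. True}"
    then show "z \<in> {((of_nat k :: rat) powi j * of_int N, 0) | j. True}" by blast
  next
    fix z :: bs assume "z \<in> {((of_nat k :: rat) powi j * of_int N, 0) | j. True}"
    then obtain j where "z = ((of_nat k :: rat) powi j * of_int N, 0)" by blast
    then have "z = ((of_nat k :: rat) powi ((j - t) + t) * of_int N, 0)" by simp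
    then show "z \<in> {((of_nat k :: rat) powi (j + t) * of_int N, 0) | j. True}" by blast
  qed
qed

lemma conjcl_self: "g \<in> conjcl k g"
proof -
  obtain x m where g: "g = (x, m)" by (cases g) auto
  have "bmul k (bmul k (0, 0) g) (binv k (0, 0)) = g" using g by (simp add: bmul_def binv_def)
  moreover have "(0, 0) \<in> BSgrp k" using zero_j_BSgrp by blast
  ultimately show ?thesis unfolding conjcl_def by force
qed

lemma factor_k: "2 \<le> k \<Longrightarrow> S \<noteq> 0 \<Longrightarrow> \<exists>a N. S = int k ^ a * N \<and> \<not> int k dvd N"
proof (induction "nat \<bar>S\<bar>" arbitrary: S rule: less_induct)
  case less
  show ?case
  proof (cases "int k dvd S")
    case False
    then show ?thesis by (intro exI[of _ 0] exI[of _ S]) simp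
  next
    case True
    then obtain S' where S': "S = int k * S'" by blast
    have "S' \<noteq> 0" using less.prems S' by auto
    have "\<bar>S'\<bar> < \<bar>S\<bar>"
    proof -
      have "2 * \<bar>S'\<bar> \<le> int k * \<bar>S'\<bar>" using less.prems by (intro mult_right_mono) auto
      then show ?thesis using S' \<open>S' \<noteq> 0\<close> by (simp add: abs_mult)
    qed
    then have "nat \<bar>S'\<bar> < nat \<bar>S\<bar>" by simp
    from less.hyps[OF this less.prems(1) \<open>S' \<noteq> 0\<close>] obtain a N where "S' = int k ^ a * N" "\<not> int k dvd N" by blast
    then show ?thesis using S' by (intro exI[of _ "Suc a"] exI[of _ N]) simp
  qed
qed

lemma class_rep: "2 \<le> k \<Longrightarrow> g \<in> BSgrp k \<Longrightarrow> snd g = 0 \<Longrightarrow> \<exists>N. (N = 0 \<or> \<not> int k dvd N) \<and> conjcl k g = cls k N"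
proof -
  assume k: "2 \<le> k" and gG: "g \<in> BSgrp k" and s: "snd g = 0"
  obtain w where w: "beval k w = g" using gG unfolding BSgrp_def by blast
  obtain x where g: "g = (x, 0)" using s by (cases g) auto
  from word_rep[of k w x 0] k w g obtain lo D f where x: "x = (of_nat k :: rat) powi lo * of_int (rsum k D f)" by auto
  show ?thesis
  proof (cases "rsum k D f = 0")
    case True
    then have "g = (of_nat k powi 0 * of_int 0, 0)" using g x by simp
    then show ?thesis using cls_shift[of k 0 0] k by (intro exI[of _ 0]) simp
  next
    case False
    from factor_k[OF k False] obtain a N where aN: "rsum k D f = int k ^ a * N" "\<not> int k dvd N" by blast
    have kq: "(of_nat k :: rat) \<noteq> 0" using k by simp
    have "x = (of_nat k :: rat) powi (lo + int a) * of_int N"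
      using x aN kq by (simp add: power_int_add)
    then show ?thesis using cls_shift[of k "lo + int a" N] k aN g by (intro exI[of _ N]) simp
  qed
qed

lemma cls_inj: "2 \<le> k \<Longrightarrow> (N1 = 0 \<or> \<not> int k dvd N1) \<Longrightarrow> (N2 = 0 \<or> \<not> int k dvd N2) \<Longrightarrow> cls k N1 = cls k N2 \<Longrightarrow> N1 = N2"
proof -
  assume k: "2 \<le> k" and h1: "N1 = 0 \<or> \<not> int k dvd N1" and h2: "N2 = 0 \<or> \<not> int k dvd N2" and e: "cls k N1 = cls k N2"
  have kq: "(of_nat k :: rat) \<noteq> 0" using k by simp
  have "(of_int N1, 0) \<in> cls k N1" unfolding cls_def by (rule CollectI, rule exI[of _ 0]) simp
  then have "(of_int N1, 0) \<in> cls k N2" using e by simp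
  then obtain j where j: "(of_int N1 :: rat) = (of_nat k) powi j * of_int N2" unfolding cls_def by auto
  show ?thesis
  proof (cases "0 \<le> j")
    case True
    then have "(of_int N1 :: rat) = of_int (int k ^ nat j * N2)" using j by (simp add: power_int_nonneg_exp)
    then have N1: "N1 = int k ^ nat j * N2" by (simp only: of_int_eq_iff)
    show ?thesis
    proof (cases "nat j = 0")
      case True then show ?thesis using N1 by simp
    next
      case False
      then have "int k dvd N1" using N1 by (simp add: dvd_mult2 dvd_power)
      then have "N1 = 0" using h1 by blast
      then show ?thesis using N1 k by simp
    qed
  next
    case False
    have "(of_nat k :: rat) powi (-j) * of_int N1 = (of_nat k) powi (-j) * (of_nat k) powi j * of_int N2"
      using j by simp
    also have "(of_nat k :: rat) powi (-j) * (of_nat k) powi j = 1" using kq by (simp add: power_int_minus)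
    finally have "(of_int N2 :: rat) = of_int (int k ^ nat (-j) * N1)" using False by (simp add: power_int_nonneg_exp)
    then have N2: "N2 = int k ^ nat (-j) * N1" by (simp only: of_int_eq_iff)
    have "int k dvd N2" using N2 False by (simp add: dvd_mult2 dvd_power)
    then have "N2 = 0" using h2 by blast
    then show ?thesis using N2 k by simp
  qed
qed

fun wd :: "nat \<Rightarrow> (nat \<Rightarrow> int) \<Rightarrow> gen list" where
  "wd 0 f = apow (f 0)"
| "wd (Suc D) f = apow (f 0) @ [T] @ wd D (\<lambda>j. f (Suc j)) @ [Ti]"

lemma length_apow: "length (apow x) = nat \<bar>x\<bar>" by (simp add: apow_def)

lemma wd_props: "k \<noteq> 0 \<Longrightarrow> beval k (wd D f) = (of_int (rsum k D f), 0) \<and> length (wd D f) = rabs D f + 2 * D"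
proof (induction D arbitrary: f)
  case 0
  then show ?case by (simp add: beval_apow length_apow rsum_def rabs_def)
next
  case (Suc D)
  have IH: "beval k (wd D (\<lambda>j. f (Suc j))) = (of_int (rsum k D (\<lambda>j. f (Suc j))), 0)"
    "length (wd D (\<lambda>j. f (Suc j))) = rabs D (\<lambda>j. f (Suc j)) + 2 * D" using Suc by auto
  have "beval k (wd (Suc D) f) = (of_int (rsum k (Suc D) f), 0)"
    using Suc.prems IH by (simp add: beval_append beval_apow bmul_def rsum_Suc_shift)
  moreover have "length (wd (Suc D) f) = rabs (Suc D) f + 2 * Suc D"
    using IH by (simp add: length_apow rabs_Suc_shift)
  ultimately show ?case by simp
qed

context
  fixes r k :: nat
  assumes r1: "1 \<le> r" and kdef: "k = 2 * r + 1"
begin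

lemma k2: "2 \<le> k" using r1 kdef by simp

lemma classlen_cls: "N = 0 \<or> \<not> int k dvd N \<Longrightarrow> classlen k (cls k N) = cost k N"
proof -
  assume hN: "N = 0 \<or> \<not> int k dvd N"
  have k0: "k \<noteq> 0" using k2 by simp
  have kq: "(of_nat k :: rat) \<noteq> 0" using k0 by simp
  obtain D f where f: "rsum k D f = N" "cost k N = rabs D f + 2 * D" using cost_ex by blast
  have ex: "\<exists>w. length w = cost k N \<and> beval k w \<in> cls k N"
  proof (intro exI conjI)
    show "length (wd D f) = cost k N" using wd_props[OF k0] f by simp
    have "beval k (wd D f) = ((of_nat k :: rat) powi 0 * of_int N, 0)" using wd_props[OF k0] f by simp
    then show "beval k (wd D f) \<in> cls k N" unfolding cls_def by blast
  qed
  have lb: "cost k N \<le> length w" if w: "beval k w \<in> cls k N" for w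
  proof -
    from w obtain j where bw: "beval k w = ((of_nat k :: rat) powi j * of_int N, 0)" unfolding cls_def by blast
    from word_rep[OF k0 bw] obtain lo D' f' where H: "lo \<le> 0"
      "(of_nat k :: rat) powi j * of_int N = (of_nat k) powi lo * of_int (rsum k D' f')"
      "int (rabs D' f') + 2 * int D' \<le> int (length w)" by auto
    define S where "S = rsum k D' f'"
    have cS: "cost k S \<le> length w" using cost_le[of k D' f' S] H(3) by (simp add: S_def)
    show ?thesis
    proof (cases "N = 0")
      case True then show ?thesis by simp
    next
      case False
      have "(of_nat k :: rat) powi lo * ((of_nat k) powi (j - lo) * of_int N) = (of_nat k) powi lo * of_int S"
        using H(2) kq by (simp add: S_def power_int_diff)
      then have e: "(of_nat k :: rat) powi (j - lo) * of_int N = of_int S" using kq by simp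
      show ?thesis
      proof (cases "0 \<le> j - lo")
        case True
        then have "(of_int S :: rat) = of_int (int k ^ nat (j - lo) * N)" using e by (simp add: power_int_nonneg_exp)
        then have "S = int k ^ nat (j - lo) * N" by (simp only: of_int_eq_iff)
        then have "cost k S = cost k N + 2 * nat (j - lo)" using cost_pow[OF r1 kdef False] by simp
        then show ?thesis using cS by simp
      next
        case False2: False
        have one: "(of_nat k :: rat) powi (lo - j) * (of_nat k) powi (j - lo) = 1"
        proof -
          have "(of_nat k :: rat) powi (lo - j) * (of_nat k) powi (j - lo) = (of_nat k) powi ((lo - j) + (j - lo))"
            using kq by (intro power_int_add[symmetric]) simp
          then show ?thesis by simp
        qed
        have "(of_int N :: rat) = ((of_nat k) powi (lo - j) * (of_nat k) powi (j - lo)) * of_int N" using one by simp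
        also have "\<dots> = (of_nat k) powi (lo - j) * of_int S" using e by (simp add: mult.assoc)
        also have "\<dots> = of_int (int k ^ nat (lo - j) * S)" using False2 by (simp add: power_int_nonneg_exp)
        finally have "(of_int N :: rat) = of_int (int k ^ nat (lo - j) * S)" .
        then have "N = int k ^ nat (lo - j) * S" by (simp only: of_int_eq_iff)
        then have "int k dvd N" using False2 by (simp add: dvd_mult2 dvd_power)
        then show ?thesis using hN False by blast
      qed
    qed
  qed
  show ?thesis unfolding classlen_def
    by (rule Least_equality) (use ex lb in auto)
qed

lemma c0_eq: "c0 k n = card {N. (N = 0 \<or> \<not> int k dvd N) \<and> cost k N = n}"
proof -
  have k0: "k \<noteq> 0" using k2 by simp
  have S: "{C. (\<exists>g \<in> BSgrp k. C = conjcl k g) \<and> C \<subseteq> {p. snd p = 0} \<and> classlen k C = n}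
     = cls k ` {N. (N = 0 \<or> \<not> int k dvd N) \<and> cost k N = n}"
  proof (intro equalityI subsetI)
    fix C assume "C \<in> {C. (\<exists>g \<in> BSgrp k. C = conjcl k g) \<and> C \<subseteq> {p. snd p = 0} \<and> classlen k C = n}"
    then obtain g where g: "g \<in> BSgrp k" "C = conjcl k g" "C \<subseteq> {p. snd p = 0}" "classlen k C = n" by blast
    have "snd g = 0" using conjcl_self[of g k] g by auto
    from class_rep[OF k2 g(1) this] obtain N where N: "N = 0 \<or> \<not> int k dvd N" "conjcl k g = cls k N" by blast
    then have "cost k N = n" using classlen_cls g by simp
    then show "C \<in> cls k ` {N. (N = 0 \<or> \<not> int k dvd N) \<and> cost k N = n}" using N g by blast
  next
    fix C assume "C \<in> cls k ` {N. (N = 0 \<or> \<not> int k dvd N) \<and> cost k N = n}"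
    then obtain N where N: "N = 0 \<or> \<not> int k dvd N" "cost k N = n" "C = cls k N" by blast
    have "(of_int N, 0) \<in> BSgrp k" using beval_apow[of k N] unfolding BSgrp_def by (metis rangeI)
    moreover have "C = conjcl k (of_int N, 0)" using N cls_conjcl[OF k0] by simp
    moreover have "C \<subseteq> {p. snd p = 0}" using N by (auto simp: cls_def)
    moreover have "classlen k C = n" using N classlen_cls by simp
    ultimately show "C \<in> {C. (\<exists>g \<in> BSgrp k. C = conjcl k g) \<and> C \<subseteq> {p. snd p = 0} \<and> classlen k C = n}" by blast
  qed
  have "inj_on (cls k) {N. (N = 0 \<or> \<not> int k dvd N) \<and> cost k N = n}"
    by (rule inj_onI) (use cls_inj[OF k2] in blast)
  then show ?thesis unfolding c0_def S by (rule card_image)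
qed

lemma c0_cN: "1 \<le> n \<Longrightarrow> c0 k n = cN k n"
proof -
  assume n: "1 \<le> n"
  have "{N. (N = 0 \<or> \<not> int k dvd N) \<and> cost k N = n} = {N. \<not> int k dvd N \<and> cost k N = n}"
    using n by auto
  then show ?thesis using c0_eq by (simp add: cN_def)
qed

lemma part2: "rational_series (c0 k)"
proof (rule rational_rec[of "Bs r" "\<lambda>b. 2 + nat \<bar>b\<bar>" "r + 6"])
  show "finite (Bs r)" by (rule Bs_finite[OF r1 kdef])
  show "\<forall>b\<in>Bs r. 1 \<le> 2 + nat \<bar>b\<bar> \<and> 2 + nat \<bar>b\<bar> \<le> r + 6" using Bs_bound[OF r1 kdef] by fastforce
  show "2 \<le> r + 6" by simp
  show "\<forall>n\<ge>r + 6. c0 k n = c0 k (n - 2) + (\<Sum>b\<in>Bs r. c0 k (n - (2 + nat \<bar>b\<bar>)))"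
  proof (intro allI impI)
    fix n assume n: "r + 6 \<le> n"
    have "(\<Sum>b\<in>Bs r. c0 k (n - (2 + nat \<bar>b\<bar>))) = (\<Sum>b\<in>Bs r. cN k (n - 2 - nat \<bar>b\<bar>))"
    proof (rule sum.cong)
      fix b assume "b \<in> Bs r"
      then have "nat \<bar>b\<bar> \<le> r" using Bs_bound[OF r1 kdef] by blast
      then show "c0 k (n - (2 + nat \<bar>b\<bar>)) = cN k (n - 2 - nat \<bar>b\<bar>)" using n c0_cN by simp
    qed simp
    then show "c0 k n = c0 k (n - 2) + (\<Sum>b\<in>Bs r. c0 k (n - (2 + nat \<bar>b\<bar>)))"
      using Rrec[OF r1 kdef n] c0_cN n by simp
  qed
qed

end


theorem proposition3p3:
  fixes r k :: nat
  assumes "r \<ge> 1" and "k = 2 * r + 1"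
  shows "unambiguous_cfl (Co r) \<and> rational_series (c0 k)"
  using part1 part2[OF assms] by blast

end
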